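(* (Bandit setting.) Let $A$ arms have reward distributions supported in $[0,1]$ with mean reward vector $r\in[0,1]^A$, and let $\Delta:=\min_{a\ne a'}|r(a)-r(a')|$. For $\theta\in\mathbb{R}^A$ let $f(\theta)=\langle\pi_\theta,r\rangle$, sample $a\sim\pi_\theta$, observe $R\sim P_a$, form $\hat r(a')=\frac{\mathbb{I}\{a=a'\}}{\pi_\theta(a')}R$ and $\hat g(\theta)(a')=\pi_\theta(a')[\hat r(a')-\langle\pi_\theta,\hat r\rangle]$. Then for all $\theta$, $\mathbb{E}\|\hat g(\theta)\|_2^2\le\varrho\,\|\nabla f(\theta)\|_2$ with $\varrho:=\frac{8A^{3/2}}{\Delta^2}$. (Tabular MDP setting.) For a finite discounted MDP with $S$ states, $A$ actions, rewards in $[0,1]$, discount $\gamma\in[0,1)$, initial distribution $\rho$, and softmax tabular policy $\pi_\theta$, let $f(\theta)=V^{\pi_\theta}(\rho)$. Sample independently $a(s)\sim\pi_\theta(\cdot\mid s)$ for every state $s$, set $\hat Q^{\pi_\theta}(s,a)=\frac{\mathbb{I}\{a(s)=a\}}{\pi_\theta(a\mid s)}Q^{\pi_\theta}(s,a)$ and $\hat g(\theta)(s,a)=\frac{1}{1-\gamma}d^{\pi_\theta}_\rho(s)\,\pi_\theta(a\mid s)\big(\hat Q^{\pi_\theta}(s,a)-\langle\pi_\theta(\cdot\mid s),\hat Q^{\pi_\theta}(s,\cdot)\rangle\big)$. Then for all $\theta$, $\mathbb{E}\|\hat g(\theta)\|_2^2\le\varrho\,\|\nabla f(\theta)\|_2$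 with $\varrho:=\frac{4A^{3/2}S^{1/2}}{(1-\gamma)^4\Delta^2}$, where $\Delta:=\min_s\min_{a\ne a'}|Q^{\pi_\theta}(s,a)-Q^{\pi_\theta}(s,a')|$.
   Context: Softmax policy: $\pi_\theta(a)=\exp(\theta(a))/\sum_{a'}\exp(\theta(a'))$ (bandit) and $\pi_\theta(a\mid s)=\exp(\theta(s,a))/\sum_{a'}\exp(\theta(s,a'))$ (MDP). In the MDP, $Q^\pi(s,a)=\mathbb{E}[\sum_{t\ge0}\gamma^t r(s_t,a_t)\mid s_0=s,a_0=a]$ under $\pi$, $V^\pi(s)=\mathbb{E}_{a\sim\pi(\cdot|s)}Q^\pi(s,a)$, $V^\pi(\rho)=\mathbb{E}_{s\sim\rho}V^\pi(s)$, $A^\pi=Q^\pi-V^\pi$, and $d^\pi_\rho(s)=(1-\gamma)\mathbb{E}_{s_0\sim\rho}\sum_{t\ge0}\gamma^t\Pr^\pi[s_t=s\mid s_0]$. The exact gradients are $\nabla f(\theta)(a)=\pi_\theta(a)[r(a)-\langle\pi_\theta,r\rangle]$ (bandit) and $\nabla f(\theta)(s,a)=\frac{1}{1-\gamma}d^{\pi_\theta}_\rho(s)\pi_\theta(a\mid s)A^{\pi_\theta}(s,a)$ (MDP). Expectations are over the sampled actions (and rewards). *)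

theory Defs
  imports "HOL-Probability.Probability"
begin

definition softmax :: "('a::finite \<Rightarrow> real) \<Rightarrow> 'a \<Rightarrow> real" where
  "softmax \<theta> a = exp (\<theta> a) / (\<Sum>a'\<in>UNIV. exp (\<theta> a'))"

definition l2norm :: "('i::finite \<Rightarrow> real) \<Rightarrow> real" where
  "l2norm v = sqrt (\<Sum>i\<in>UNIV. (v i)\<^sup>2)"

definition mean_reward :: "('a \<Rightarrow> real measure) \<Rightarrow> 'a \<Rightarrow> real" where
  "mean_reward P a = (\<integral>x. x \<partial>(P a))"

definition bandit_obj :: "('a::finite \<Rightarrow> real) \<Rightarrow> ('a \<Rightarrow> real) \<Rightarrow> real" where
  "bandit_obj r \<theta> = (\<Sum>a\<in>UNIV. softmax \<theta> a * r a)"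

definition bandit_grad :: "('a::finite \<Rightarrow> real) \<Rightarrow> ('a \<Rightarrow> real) \<Rightarrow> 'a \<Rightarrow> real" where
  "bandit_grad r \<theta> a = softmax \<theta> a * (r a - bandit_obj r \<theta>)"

definition bandit_rhat :: "('a::finite \<Rightarrow> real) \<Rightarrow> 'a \<Rightarrow> real \<Rightarrow> 'a \<Rightarrow> real" where
  "bandit_rhat \<theta> a R a' = (if a = a' then 1 else 0) / softmax \<theta> a' * R"

definition bandit_ghat :: "('a::finite \<Rightarrow> real) \<Rightarrow> 'a \<Rightarrow> real \<Rightarrow> 'a \<Rightarrow> real" where
  "bandit_ghat \<theta> a R a' =
     softmax \<theta> a' * (bandit_rhat \<theta> a R a' - (\<Sum>b\<in>UNIV. softmax \<theta> b * bandit_rhat \<theta> a R b))"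

definition bandit_second_moment :: "('a::finite \<Rightarrow> real measure) \<Rightarrow> ('a \<Rightarrow> real) \<Rightarrow> real" where
  "bandit_second_moment P \<theta> =
     (\<Sum>a\<in>UNIV. softmax \<theta> a * (\<integral>R. (l2norm (bandit_ghat \<theta> a R))\<^sup>2 \<partial>(P a)))"

definition bandit_gap :: "('a \<Rightarrow> real) \<Rightarrow> real" where
  "bandit_gap r = Min {\<bar>r a - r a'\<bar> | a a'. a \<noteq> a'}"

definition tpol :: "('s \<Rightarrow> 'a::finite \<Rightarrow> real) \<Rightarrow> 's \<Rightarrow> 'a \<Rightarrow> real" where
  "tpol \<theta> s a = softmax (\<theta> s) a"

text \<open>Distribution of (s_t, a_t) given s_0 = s, a_0 = a, under transition kernel Pt and policy pi.\<close>
fun sa_dist :: "('s::finite \<Rightarrow> 'a::finite \<Rightarrow> 's pmf) \<Rightarrow> ('s \<Rightarrow> 'a \<Rightarrow> real) \<Rightarrow> 's \<Rightarrow> 'a \<Rightarrow> nat \<Rightarrow> 's \<Rightarrow> 'a \<Rightarrow> real" where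
  "sa_dist Pt \<pi> s a 0 s' a' = (if s' = s \<and> a' = a then 1 else 0)"
| "sa_dist Pt \<pi> s a (Suc t) s' a' =
     (\<Sum>u\<in>UNIV. \<Sum>b\<in>UNIV. sa_dist Pt \<pi> s a t u b * pmf (Pt u b) s') * \<pi> s' a'"

definition Qfun :: "('s::finite \<Rightarrow> 'a::finite \<Rightarrow> 's pmf) \<Rightarrow> ('s \<Rightarrow> 'a \<Rightarrow> real) \<Rightarrow> real \<Rightarrow> ('s \<Rightarrow> 'a \<Rightarrow> real) \<Rightarrow> 's \<Rightarrow> 'a \<Rightarrow> real" where
  "Qfun Pt rw \<gamma> \<pi> s a =
     (\<Sum>t. \<gamma> ^ t * (\<Sum>s'\<in>UNIV. \<Sum>a'\<in>UNIV. sa_dist Pt \<pi> s a t s' a' * rw s' a'))"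

definition Vfun :: "('s::finite \<Rightarrow> 'a::finite \<Rightarrow> 's pmf) \<Rightarrow> ('s \<Rightarrow> 'a \<Rightarrow> real) \<Rightarrow> real \<Rightarrow> ('s \<Rightarrow> 'a \<Rightarrow> real) \<Rightarrow> 's \<Rightarrow> real" where
  "Vfun Pt rw \<gamma> \<pi> s = (\<Sum>a\<in>UNIV. \<pi> s a * Qfun Pt rw \<gamma> \<pi> s a)"

definition Vrho :: "('s::finite \<Rightarrow> 'a::finite \<Rightarrow> 's pmf) \<Rightarrow> ('s \<Rightarrow> 'a \<Rightarrow> real) \<Rightarrow> real \<Rightarrow> 's pmf \<Rightarrow> ('s \<Rightarrow> 'a \<Rightarrow> real) \<Rightarrow> real" where
  "Vrho Pt rw \<gamma> \<rho> \<pi> = (\<Sum>s\<in>UNIV. pmf \<rho> s * Vfun Pt rw \<gamma> \<pi> s)"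

definition Afun :: "('s::finite \<Rightarrow> 'a::finite \<Rightarrow> 's pmf) \<Rightarrow> ('s \<Rightarrow> 'a \<Rightarrow> real) \<Rightarrow> real \<Rightarrow> ('s \<Rightarrow> 'a \<Rightarrow> real) \<Rightarrow> 's \<Rightarrow> 'a \<Rightarrow> real" where
  "Afun Pt rw \<gamma> \<pi> s a = Qfun Pt rw \<gamma> \<pi> s a - Vfun Pt rw \<gamma> \<pi> s"

text \<open>Pr^pi[s_t = s' | s_0 = s].\<close>
fun st_dist :: "('s::finite \<Rightarrow> 'a::finite \<Rightarrow> 's pmf) \<Rightarrow> ('s \<Rightarrow> 'a \<Rightarrow> real) \<Rightarrow> 's \<Rightarrow> nat \<Rightarrow> 's \<Rightarrow> real" where
  "st_dist Pt \<pi> s 0 s' = (if s' = s then 1 else 0)"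
| "st_dist Pt \<pi> s (Suc t) s' =
     (\<Sum>u\<in>UNIV. \<Sum>b\<in>UNIV. st_dist Pt \<pi> s t u * \<pi> u b * pmf (Pt u b) s')"

definition dvisit :: "('s::finite \<Rightarrow> 'a::finite \<Rightarrow> 's pmf) \<Rightarrow> real \<Rightarrow> 's pmf \<Rightarrow> ('s \<Rightarrow> 'a \<Rightarrow> real) \<Rightarrow> 's \<Rightarrow> real" where
  "dvisit Pt \<gamma> \<rho> \<pi> s = (1 - \<gamma>) * (\<Sum>s0\<in>UNIV. pmf \<rho> s0 * (\<Sum>t. \<gamma> ^ t * st_dist Pt \<pi> s0 t s))"

definition mdp_grad :: "('s::finite \<Rightarrow> 'a::finite \<Rightarrow> 's pmf) \<Rightarrow> ('s \<Rightarrow> 'a \<Rightarrow> real) \<Rightarrow> real \<Rightarrow> 's pmf \<Rightarrow> ('s \<Rightarrow> 'a \<Rightarrow> real) \<Rightarrow> 's \<times> 'a \<Rightarrow> real" where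
  "mdp_grad Pt rw \<gamma> \<rho> \<theta> sa =
     (let \<pi> = tpol \<theta>; s = fst sa; a = snd sa in
       1 / (1 - \<gamma>) * dvisit Pt \<gamma> \<rho> \<pi> s * \<pi> s a * Afun Pt rw \<gamma> \<pi> s a)"

text \<open>Estimator given sampled actions sigma s ~ pi_theta(.|s), independently per state.\<close>
definition mdp_Qhat :: "('s::finite \<Rightarrow> 'a::finite \<Rightarrow> 's pmf) \<Rightarrow> ('s \<Rightarrow> 'a \<Rightarrow> real) \<Rightarrow> real \<Rightarrow> ('s \<Rightarrow> 'a \<Rightarrow> real) \<Rightarrow> ('s \<Rightarrow> 'a) \<Rightarrow> 's \<Rightarrow> 'a \<Rightarrow> real" where
  "mdp_Qhat Pt rw \<gamma> \<theta> \<sigma> s a =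
     (if \<sigma> s = a then 1 else 0) / tpol \<theta> s a * Qfun Pt rw \<gamma> (tpol \<theta>) s a"

definition mdp_ghat :: "('s::finite \<Rightarrow> 'a::finite \<Rightarrow> 's pmf) \<Rightarrow> ('s \<Rightarrow> 'a \<Rightarrow> real) \<Rightarrow> real \<Rightarrow> 's pmf \<Rightarrow> ('s \<Rightarrow> 'a \<Rightarrow> real) \<Rightarrow> ('s \<Rightarrow> 'a) \<Rightarrow> 's \<times> 'a \<Rightarrow> real" where
  "mdp_ghat Pt rw \<gamma> \<rho> \<theta> \<sigma> sa =
     (let \<pi> = tpol \<theta>; s = fst sa; a = snd sa in
       1 / (1 - \<gamma>) * dvisit Pt \<gamma> \<rho> \<pi> s * \<pi> s a *
       (mdp_Qhat Pt rw \<gamma> \<theta> \<sigma> s a - (\<Sum>b\<in>UNIV. \<pi> s b * mdp_Qhat Pt rw \<gamma> \<theta> \<sigma> s b)))"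

definition mdp_second_moment :: "('s::finite \<Rightarrow> 'a::finite \<Rightarrow> 's pmf) \<Rightarrow> ('s \<Rightarrow> 'a \<Rightarrow> real) \<Rightarrow> real \<Rightarrow> 's pmf \<Rightarrow> ('s \<Rightarrow> 'a \<Rightarrow> real) \<Rightarrow> real" where
  "mdp_second_moment Pt rw \<gamma> \<rho> \<theta> =
     (\<Sum>\<sigma>\<in>(UNIV :: ('s \<Rightarrow> 'a) set). (\<Prod>s\<in>UNIV. tpol \<theta> s (\<sigma> s)) *
        (l2norm (mdp_ghat Pt rw \<gamma> \<rho> \<theta> \<sigma>))\<^sup>2)"

definition mdp_gap :: "('s::finite \<Rightarrow> 'a::finite \<Rightarrow> 's pmf) \<Rightarrow> ('s \<Rightarrow> 'a \<Rightarrow> real) \<Rightarrow> real \<Rightarrow> ('s \<Rightarrow> 'a \<Rightarrow> real) \<Rightarrow> real" where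
  "mdp_gap Pt rw \<gamma> \<theta> =
     Min {\<bar>Qfun Pt rw \<gamma> (tpol \<theta>) s a - Qfun Pt rw \<gamma> (tpol \<theta>) s a'\<bar> | s a a'. a \<noteq> a'}"

end

theory Submission
  imports Defs
begin


lemma softmax_pos: "softmax \<theta> a > 0"
  unfolding softmax_def by (intro divide_pos_pos) (auto intro: sum_pos)

lemma softmax_sum: "(\<Sum>a\<in>UNIV. softmax \<theta> a) = 1"
proof -
  have "(\<Sum>a'\<in>UNIV. exp (\<theta> a')) > 0" by (auto intro: sum_pos)
  then show ?thesis unfolding softmax_def by (simp add: sum_divide_distrib[symmetric])
qed

lemma core_gap:
  fixes p q :: "'a::finite \<Rightarrow> real"
  assumes p0: "\<And>a. p a \<ge> 0" and p1: "(\<Sum>a\<in>UNIV. p a) = 1" and D0: "D \<ge> 0"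
    and gap: "\<And>a a'. a \<noteq> a' \<Longrightarrow> D \<le> \<bar>q a - q a'\<bar>"
  shows "(1 - (\<Sum>a\<in>UNIV. (p a)\<^sup>2)) * D \<le> 4 * (\<Sum>a\<in>UNIV. p a * \<bar>q a - (\<Sum>b\<in>UNIV. p b * q b)\<bar>)"
proof -
  define \<mu> where "\<mu> = (\<Sum>b\<in>UNIV. p b * q b)"
  obtain b where b: "\<And>a. a \<noteq> b \<Longrightarrow> D / 2 \<le> \<bar>q a - \<mu>\<bar>"
  proof (cases "\<exists>b. \<bar>q b - \<mu>\<bar> < D / 2")
    case True
    then obtain b where hb: "\<bar>q b - \<mu>\<bar> < D / 2" by blast
    show ?thesis
    proof (rule that[of b])
      fix a assume "a \<noteq> b"
      from gap[OF this] hb show "D / 2 \<le> \<bar>q a - \<mu>\<bar>" by linarith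
    qed
  next
    case False
    then show ?thesis using that by (meson not_less)
  qed
  have pb: "0 \<le> p b" "p b \<le> 1"
    using p0 p1 member_le_sum[of b UNIV p] by auto
  have "(\<Sum>a\<in>UNIV. p a) = p b + (\<Sum>a\<in>UNIV-{b}. p a)"
    by (simp add: sum.remove)
  hence rest: "(\<Sum>a\<in>UNIV-{b}. p a) = 1 - p b" using p1 by simp
  have "(1 - p b) * (D/2) = (\<Sum>a\<in>UNIV-{b}. p a * (D/2))"
    by (simp only: rest[symmetric] sum_distrib_right)
  also have "\<dots> \<le> (\<Sum>a\<in>UNIV-{b}. p a * \<bar>q a - \<mu>\<bar>)"
    by (intro sum_mono mult_left_mono b p0) auto
  also have "\<dots> \<le> (\<Sum>a\<in>UNIV. p a * \<bar>q a - \<mu>\<bar>)"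
    by (intro sum_mono2) (auto simp: p0)
  finally have h1: "(1 - p b) * (D/2) \<le> (\<Sum>a\<in>UNIV. p a * \<bar>q a - \<mu>\<bar>)" .
  have "(p b)\<^sup>2 \<le> (\<Sum>a\<in>UNIV. (p a)\<^sup>2)"
    by (rule member_le_sum) auto
  hence "1 - (\<Sum>a\<in>UNIV. (p a)\<^sup>2) \<le> (1 - p b) * (1 + p b)"
    by (simp add: power2_eq_square algebra_simps)
  also have "\<dots> \<le> (1 - p b) * 2" using pb by (intro mult_left_mono) auto
  finally have "(1 - (\<Sum>a\<in>UNIV. (p a)\<^sup>2)) * D \<le> (1 - p b) * 2 * D"
    using D0 by (intro mult_right_mono) auto
  with h1 show ?thesis unfolding \<mu>_def by linarith
qed

lemma l1_l2:
  fixes x :: "'i::finite \<Rightarrow> real"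
  shows "(\<Sum>i\<in>UNIV. \<bar>x i\<bar>) \<le> sqrt (real CARD('i)) * l2norm x"
proof -
  have "(\<Sum>i\<in>UNIV. 1 * \<bar>x i\<bar>)\<^sup>2 \<le> (\<Sum>i\<in>(UNIV::'i set). 1\<^sup>2) * (\<Sum>i\<in>UNIV. \<bar>x i\<bar>\<^sup>2)"
    using Cauchy_Schwarz_ineq_sum[where a="\<lambda>_. 1::real" and b="\<lambda>i. \<bar>x i\<bar>" and I=UNIV] by simp
  hence "(\<Sum>i\<in>UNIV. \<bar>x i\<bar>)\<^sup>2 \<le> real CARD('i) * (\<Sum>i\<in>UNIV. (x i)\<^sup>2)" by simp
  hence "sqrt ((\<Sum>i\<in>UNIV. \<bar>x i\<bar>)\<^sup>2) \<le> sqrt (real CARD('i) * (\<Sum>i\<in>UNIV. (x i)\<^sup>2))"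
    using real_sqrt_le_mono by blast
  moreover have "(\<Sum>i\<in>UNIV. \<bar>x i\<bar>) \<ge> 0" by (intro sum_nonneg) auto
  ultimately show ?thesis unfolding l2norm_def by (simp add: real_sqrt_mult)
qed

lemma l2norm_sq: "(l2norm v)\<^sup>2 = (\<Sum>i\<in>UNIV. (v i)\<^sup>2)"
  unfolding l2norm_def by (simp add: sum_nonneg)

lemma Kform:
  fixes p :: "'a::finite \<Rightarrow> real"
  shows "(\<Sum>a'\<in>UNIV. ((if b = a' then 1 else 0) - p a')\<^sup>2) = 1 - 2 * p b + (\<Sum>a\<in>UNIV. (p a)\<^sup>2)"
proof -
  have "(\<Sum>a'\<in>UNIV. ((if b = a' then 1 else 0) - p a')\<^sup>2)
      = (\<Sum>a'\<in>UNIV. (if b = a' then 1 - 2 * p a' else 0) + (p a')\<^sup>2)"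
    by (intro sum.cong) (auto simp: power2_eq_square algebra_simps)
  also have "\<dots> = 1 - 2 * p b + (\<Sum>a\<in>UNIV. (p a)\<^sup>2)"
    by (simp add: sum.distrib)
  finally show ?thesis .
qed

lemma Kavg:
  fixes p :: "'a::finite \<Rightarrow> real"
  assumes "(\<Sum>a\<in>UNIV. p a) = 1"
  shows "(\<Sum>b\<in>UNIV. p b * (\<Sum>a'\<in>UNIV. ((if b = a' then 1 else 0) - p a')\<^sup>2)) = 1 - (\<Sum>a\<in>UNIV. (p a)\<^sup>2)"
proof -
  have "(\<Sum>b\<in>UNIV. p b * (\<Sum>a'\<in>UNIV. ((if b = a' then 1 else 0) - p a')\<^sup>2))
     = (\<Sum>b\<in>UNIV. p b * (1 + (\<Sum>a\<in>UNIV. (p a)\<^sup>2)) - 2 * (p b)\<^sup>2)"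
    unfolding Kform by (simp add: power2_eq_square algebra_simps)
  also have "\<dots> = 1 - (\<Sum>a\<in>UNIV. (p a)\<^sup>2)"
    by (simp add: sum_subtractf sum_distrib_right[symmetric] assms sum_distrib_left[symmetric])
  finally show ?thesis .
qed

lemma marginal:
  fixes w :: "'s::finite \<Rightarrow> 'a::finite \<Rightarrow> real"
  assumes "\<And>s. (\<Sum>a\<in>UNIV. w s a) = 1"
  shows "(\<Sum>\<sigma>\<in>(UNIV::('s\<Rightarrow>'a) set). (\<Prod>s\<in>UNIV. w s (\<sigma> s)) * h (\<sigma> s0)) = (\<Sum>a\<in>UNIV. w s0 a * h a)"
proof -
  define f where "f s b = w s b * (if s = s0 then h b else 1)" for s b
  have "(\<Sum>\<sigma>\<in>(UNIV::('s\<Rightarrow>'a) set). (\<Prod>s\<in>UNIV. w s (\<sigma> s)) * h (\<sigma> s0))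
      = (\<Sum>\<sigma>\<in>PiE UNIV (\<lambda>_. UNIV). (\<Prod>s\<in>UNIV. f s (\<sigma> s)))"
  proof (intro sum.cong)
    fix \<sigma> :: "'s \<Rightarrow> 'a"
    have "(\<Prod>s\<in>UNIV. f s (\<sigma> s)) = (\<Prod>s\<in>UNIV. w s (\<sigma> s)) * (\<Prod>s\<in>UNIV. (if s = s0 then h (\<sigma> s) else 1))"
      unfolding f_def by (simp add: prod.distrib)
    also have "(\<Prod>s\<in>UNIV. (if s = s0 then h (\<sigma> s) else 1)) = h (\<sigma> s0)"
      by (simp add: prod.If_cases)
    finally show "(\<Prod>s\<in>UNIV. w s (\<sigma> s)) * h (\<sigma> s0) = (\<Prod>s\<in>UNIV. f s (\<sigma> s))" by simp
  qed simp
  also have "\<dots> = (\<Prod>s\<in>UNIV. \<Sum>b\<in>UNIV. f s b)"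
    by (rule prod_sum_PiE[symmetric]) auto
  also have "\<dots> = (\<Prod>s\<in>UNIV. if s = s0 then (\<Sum>a\<in>UNIV. w s0 a * h a) else 1)"
    by (intro prod.cong) (auto simp: f_def assms)
  also have "\<dots> = (\<Sum>a\<in>UNIV. w s0 a * h a)"
    by (simp add: prod.If_cases)
  finally show ?thesis .
qed




lemma int01:
  fixes f :: "'b \<Rightarrow> real"
  assumes "prob_space M" and "AE x in M. 0 \<le> f x \<and> f x \<le> 1"
  shows "0 \<le> (\<integral>x. f x \<partial>M) \<and> (\<integral>x. f x \<partial>M) \<le> 1"
proof
  show "0 \<le> (\<integral>x. f x \<partial>M)" using assms(2) by (intro integral_nonneg_AE) auto
  interpret prob_space M by fact
  have "(\<integral>x. f x \<partial>M) \<le> (\<integral>x. 1 \<partial>M)"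
    using assms(2) by (intro integral_mono_AE') auto
  then show "(\<integral>x. f x \<partial>M) \<le> 1" by (simp add: prob_space)
qed

lemma bandit_ghat_eq:
  "bandit_ghat \<theta> a R a' = R * ((if a = a' then 1 else 0) - softmax \<theta> a')"
proof -
  have "(\<Sum>b\<in>UNIV. softmax \<theta> b * bandit_rhat \<theta> a R b) = (\<Sum>b\<in>UNIV. if a = b then R else 0)"
    by (intro sum.cong) (auto simp: bandit_rhat_def softmax_pos[THEN less_imp_neq, symmetric])
  also have "\<dots> = R" by simp
  finally show ?thesis
    unfolding bandit_ghat_def by (auto simp: bandit_rhat_def softmax_pos[THEN less_imp_neq, symmetric] algebra_simps)
qed

lemma bandit_part:
  fixes P :: "'arm::finite \<Rightarrow> real measure" and \<theta> :: "'arm \<Rightarrow> real"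
  assumes P_prob: "\<And>a. prob_space (P a)"
    and P_supp: "\<And>a. AE x in P a. 0 \<le> x \<and> x \<le> 1"
    and gpos: "bandit_gap (mean_reward P) > 0"
  shows "bandit_second_moment P \<theta>
          \<le> 8 * real CARD('arm) powr (3/2) / (bandit_gap (mean_reward P))\<^sup>2
             * l2norm (bandit_grad (mean_reward P) \<theta>)"
proof -
  define \<pi> where "\<pi> = softmax \<theta>"
  define r where "r = mean_reward P"
  define \<Delta> where "\<Delta> = bandit_gap r"
  define S2 where "S2 = (\<Sum>a\<in>UNIV. (\<pi> a)\<^sup>2)"
  define K where "K b = (\<Sum>a'\<in>UNIV. ((if b = a' then 1 else 0) - \<pi> a')\<^sup>2)" for b
  define g where "g = l2norm (bandit_grad r \<theta>)"
  define A where "A = real CARD('arm)"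
  have \<pi>pos: "\<And>a. \<pi> a > 0" unfolding \<pi>_def by (rule softmax_pos)
  have \<pi>sum: "(\<Sum>a\<in>UNIV. \<pi> a) = 1" unfolding \<pi>_def by (rule softmax_sum)
  have K0: "K b \<ge> 0" for b unfolding K_def by (intro sum_nonneg) auto
  have r01: "0 \<le> r a \<and> r a \<le> 1" for a
    unfolding r_def mean_reward_def using int01[OF P_prob P_supp] .
  have R2: "0 \<le> (\<integral>x. x\<^sup>2 \<partial>P a) \<and> (\<integral>x. x\<^sup>2 \<partial>P a) \<le> 1" for a
  proof (rule int01[OF P_prob])
    show "AE x in P a. 0 \<le> x\<^sup>2 \<and> x\<^sup>2 \<le> 1" using P_supp[of a]
      by eventually_elim (auto simp: power_le_one)
  qed
  have E: "bandit_second_moment P \<theta> \<le> 1 - S2"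
  proof -
    have "bandit_second_moment P \<theta> = (\<Sum>a\<in>UNIV. \<pi> a * ((\<integral>x. x\<^sup>2 \<partial>P a) * K a))"
      unfolding bandit_second_moment_def l2norm_sq bandit_ghat_eq K_def \<pi>_def
      by (simp add: power_mult_distrib sum_distrib_left[symmetric])
    also have "\<dots> \<le> (\<Sum>a\<in>UNIV. \<pi> a * K a)"
      using R2 K0 \<pi>pos
      by (intro sum_mono mult_left_mono) (auto simp: less_imp_le intro: mult_left_le_one_le)
    also have "\<dots> = 1 - S2" unfolding K_def S2_def by (rule Kavg[OF \<pi>sum])
    finally show ?thesis .
  qed
  have g0: "g \<ge> 0" unfolding g_def l2norm_def by (simp add: sum_nonneg)
  have A1: "A \<ge> 1" unfolding A_def by simp
  have Apow: "A powr (3/2) = A * sqrt A"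
  proof -
    have "A powr (3/2) = A powr (1 + 1/2)" by simp
    also have "\<dots> = A powr 1 * A powr (1/2)" by (rule powr_add)
    also have "\<dots> = A * sqrt A" using A1 by (simp add: powr_half_sqrt)
    finally show ?thesis .
  qed
  show ?thesis
  proof (cases "\<exists>a a'::'arm. a \<noteq> a'")
    case True
    have fin: "finite {\<bar>r a - r a'\<bar> | a a'. a \<noteq> a'}"
      by (rule finite_subset[of _ "(\<lambda>(a,a'). \<bar>r a - r a'\<bar>) ` UNIV"]) auto
    have gap: "\<Delta> \<le> \<bar>r a - r a'\<bar>" if "a \<noteq> a'" for a a'
      unfolding \<Delta>_def bandit_gap_def using that by (intro Min_le fin) blast
    obtain a0 a1 :: 'arm where "a0 \<noteq> a1" using True by blast
    from gap[OF this] r01[of a0] r01[of a1] have D1: "\<Delta> \<le> 1" by linarith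
    have D0: "\<Delta> > 0" using gpos unfolding \<Delta>_def r_def .
    have "(1 - S2) * \<Delta> \<le> 4 * (\<Sum>a\<in>UNIV. \<pi> a * \<bar>r a - (\<Sum>b\<in>UNIV. \<pi> b * r b)\<bar>)"
      unfolding S2_def using \<pi>pos \<pi>sum D0 gap by (intro core_gap) (auto simp: less_imp_le)
    also have "(\<Sum>a\<in>UNIV. \<pi> a * \<bar>r a - (\<Sum>b\<in>UNIV. \<pi> b * r b)\<bar>) = (\<Sum>a\<in>UNIV. \<bar>bandit_grad r \<theta> a\<bar>)"
      unfolding bandit_grad_def bandit_obj_def \<pi>_def
      by (intro sum.cong) (auto simp: abs_mult softmax_pos[THEN less_imp_le] mult.commute)
    also have "\<dots> \<le> sqrt A * g" unfolding A_def g_def by (rule l1_l2)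
    finally have key: "(1 - S2) * \<Delta> \<le> 4 * (sqrt A * g)" by simp
    have "bandit_second_moment P \<theta> * \<Delta> \<le> (1 - S2) * \<Delta>"
      using E D0 by (intro mult_right_mono) auto
    also have "\<dots> \<le> 4 * sqrt A * g" using key by simp
    also have "\<dots> \<le> 8 * A * sqrt A * g / \<Delta>"
    proof -
      have "4 * sqrt A * g * \<Delta> \<le> 4 * sqrt A * g * 1"
        using D1 g0 A1 by (intro mult_left_mono) auto
      also have "\<dots> \<le> 8 * A * sqrt A * g" using A1 g0
        by (simp add: mult_right_mono)
      finally show ?thesis using D0 by (simp add: field_simps)
    qed
    finally have "bandit_second_moment P \<theta> \<le> 8 * A * sqrt A * g / \<Delta> / \<Delta>"
      using D0 by (simp add: field_simps)
    thus ?thesis unfolding Apow[unfolded A_def] using D0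
      by (simp add: \<Delta>_def r_def g_def A_def power2_eq_square field_simps)
  next
    case False
    then obtain b :: 'arm where U: "UNIV = {b}" by (metis UNIV_eq_I singletonI)  
    have "\<pi> b = 1" using \<pi>sum unfolding U by simp
    hence "S2 = 1" unfolding S2_def U by simp
    hence "bandit_second_moment P \<theta> \<le> 0" using E by simp
    also have "0 \<le> 8 * real CARD('arm) powr (3/2) / (bandit_gap (mean_reward P))\<^sup>2
             * l2norm (bandit_grad (mean_reward P) \<theta>)"
      using g0 unfolding g_def r_def by simp
    finally show ?thesis .
  qed
qed




lemma sum_pair_UNIV: "(\<Sum>x\<in>(UNIV::('a::finite \<times> 'b::finite) set). f x) = (\<Sum>s\<in>UNIV. \<Sum>a\<in>UNIV. f (s,a))"
  by (simp add: sum.cartesian_product flip: UNIV_Times_UNIV)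

lemma pmf_sum1: "(\<Sum>s\<in>(UNIV::'s::finite set). pmf p s) = 1"
  by (rule sum_pmf_eq_1) auto

lemma st_dist_props:
  assumes "\<And>u b. \<pi> u b \<ge> 0" "\<And>u. (\<Sum>b\<in>UNIV. \<pi> u b) = 1"
  shows "(\<forall>s'. st_dist Pt \<pi> s t s' \<ge> 0) \<and> (\<Sum>s'\<in>UNIV. st_dist Pt \<pi> s t s') = 1"
proof (induction t)
  case 0
  then show ?case by simp
next
  case (Suc t)
  have "(\<Sum>s'\<in>UNIV. st_dist Pt \<pi> s (Suc t) s') =
        (\<Sum>u\<in>UNIV. \<Sum>b\<in>UNIV. st_dist Pt \<pi> s t u * \<pi> u b * (\<Sum>s'\<in>UNIV. pmf (Pt u b) s'))"
    by (simp add: sum_distrib_left) (subst sum.swap, rule sum.cong, simp, subst sum.swap, simp)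
  also have "\<dots> = (\<Sum>u\<in>UNIV. st_dist Pt \<pi> s t u * (\<Sum>b\<in>UNIV. \<pi> u b))"
    by (simp add: pmf_sum1 sum_distrib_left)
  also have "\<dots> = 1" using Suc assms(2) by simp
  finally show ?case using Suc assms(1)
    by (auto intro!: sum_nonneg mult_nonneg_nonneg)
qed

lemma sa_dist_props:
  assumes "\<And>u b. \<pi> u b \<ge> 0" "\<And>u. (\<Sum>b\<in>UNIV. \<pi> u b) = 1"
  shows "(\<forall>s' a'. sa_dist Pt \<pi> s a t s' a' \<ge> 0) \<and> (\<Sum>s'\<in>UNIV. \<Sum>a'\<in>UNIV. sa_dist Pt \<pi> s a t s' a') = 1"
proof (induction t)
  case 0
  have "(\<Sum>a'\<in>UNIV. if s' = s \<and> a' = a then 1 else 0) = (if s' = s then 1 else (0::real))" for s'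
    by (cases "s' = s") auto
  then show ?case by simp
next
  case (Suc t)
  have "(\<Sum>s'\<in>UNIV. \<Sum>a'\<in>UNIV. sa_dist Pt \<pi> s a (Suc t) s' a') =
        (\<Sum>s'\<in>UNIV. (\<Sum>u\<in>UNIV. \<Sum>b\<in>UNIV. sa_dist Pt \<pi> s a t u b * pmf (Pt u b) s') * (\<Sum>a'\<in>UNIV. \<pi> s' a'))"
    by (simp add: sum_distrib_left)
  also have "\<dots> = (\<Sum>u\<in>UNIV. \<Sum>b\<in>UNIV. sa_dist Pt \<pi> s a t u b * (\<Sum>s'\<in>UNIV. pmf (Pt u b) s'))"
    by (simp add: assms(2) sum_distrib_left) (subst sum.swap, rule sum.cong, simp, subst sum.swap, simp)
  also have "\<dots> = 1" using Suc by (simp add: pmf_sum1)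
  finally show ?case using Suc assms(1)
    by (auto intro!: sum_nonneg mult_nonneg_nonneg)
qed

lemma geo_bound:
  fixes x :: "nat \<Rightarrow> real"
  assumes "0 \<le> \<gamma>" "\<gamma> < 1" "\<And>t. 0 \<le> x t \<and> x t \<le> 1"
  shows "0 \<le> (\<Sum>t. \<gamma> ^ t * x t) \<and> (\<Sum>t. \<gamma> ^ t * x t) \<le> 1 / (1 - \<gamma>)"
proof -
  have sg: "summable (\<lambda>t. \<gamma> ^ t)" using assms by (intro summable_geometric) auto
  have le: "\<gamma> ^ t * x t \<le> \<gamma> ^ t" for t
    using assms by (intro mult_left_le) auto
  have nn: "0 \<le> \<gamma> ^ t * x t" for t using assms by auto
  have s: "summable (\<lambda>t. \<gamma> ^ t * x t)"
    by (rule summable_comparison_test'[OF sg]) (use le nn in auto)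
  have "(\<Sum>t. \<gamma> ^ t * x t) \<le> (\<Sum>t. \<gamma> ^ t)" by (rule suminf_le[OF le s sg])
  also have "\<dots> = 1 / (1 - \<gamma>)" using assms by (intro suminf_geometric) auto
  finally show ?thesis using s nn by (auto intro: suminf_nonneg)
qed




lemma tpol_pos: "tpol \<theta> s a > 0" unfolding tpol_def by (rule softmax_pos)
lemma tpol_nn: "tpol \<theta> s a \<ge> 0" by (rule less_imp_le[OF tpol_pos])
lemma tpol_sum: "(\<Sum>a\<in>UNIV. tpol \<theta> s a) = 1" unfolding tpol_def by (rule softmax_sum)

lemma Q_bounds:
  fixes Pt :: "'s::finite \<Rightarrow> 'act::finite \<Rightarrow> 's pmf"
  assumes rw: "\<And>s a. 0 \<le> rw s a \<and> rw s a \<le> 1" and g: "0 \<le> \<gamma>" "\<gamma> < 1"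
  shows "0 \<le> Qfun Pt rw \<gamma> (tpol \<theta>) s a \<and> Qfun Pt rw \<gamma> (tpol \<theta>) s a \<le> 1 / (1 - \<gamma>)"
  unfolding Qfun_def
proof (rule geo_bound[OF g])
  fix t
  note P = sa_dist_props[of "tpol \<theta>" Pt s a t, OF tpol_nn tpol_sum]
  have "(\<Sum>s'\<in>UNIV. \<Sum>a'\<in>UNIV. sa_dist Pt (tpol \<theta>) s a t s' a' * rw s' a')
        \<le> (\<Sum>s'\<in>UNIV. \<Sum>a'\<in>UNIV. sa_dist Pt (tpol \<theta>) s a t s' a')"
    using P rw by (intro sum_mono mult_left_le) auto
  moreover have "0 \<le> (\<Sum>s'\<in>UNIV. \<Sum>a'\<in>UNIV. sa_dist Pt (tpol \<theta>) s a t s' a' * rw s' a')"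
    using P rw by (intro sum_nonneg mult_nonneg_nonneg) auto
  ultimately show "0 \<le> (\<Sum>s'\<in>UNIV. \<Sum>a'\<in>UNIV. sa_dist Pt (tpol \<theta>) s a t s' a' * rw s' a') \<and>
        (\<Sum>s'\<in>UNIV. \<Sum>a'\<in>UNIV. sa_dist Pt (tpol \<theta>) s a t s' a' * rw s' a') \<le> 1"
    using conjunct2[OF P] by linarith
qed

lemma d_bounds:
  fixes Pt :: "'s::finite \<Rightarrow> 'act::finite \<Rightarrow> 's pmf"
  assumes g: "0 \<le> \<gamma>" "\<gamma> < 1"
  shows "0 \<le> dvisit Pt \<gamma> \<rho> (tpol \<theta>) s \<and> dvisit Pt \<gamma> \<rho> (tpol \<theta>) s \<le> 1"
proof -
  define Y where "Y s0 = (\<Sum>t. \<gamma> ^ t * st_dist Pt (tpol \<theta>) s0 t s)" for s0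
  have Y: "0 \<le> Y s0 \<and> Y s0 \<le> 1 / (1 - \<gamma>)" for s0
    unfolding Y_def
  proof (rule geo_bound[OF g])
    fix t
    note P = st_dist_props[of "tpol \<theta>" Pt s0 t, OF tpol_nn tpol_sum]
    have "st_dist Pt (tpol \<theta>) s0 t s \<le> (\<Sum>s'\<in>UNIV. st_dist Pt (tpol \<theta>) s0 t s')"
      using P by (intro member_le_sum) auto
    then show "0 \<le> st_dist Pt (tpol \<theta>) s0 t s \<and> st_dist Pt (tpol \<theta>) s0 t s \<le> 1"
      using conjunct2[OF P] conjunct1[OF P] by auto
  qed
  have "(\<Sum>s0\<in>UNIV. pmf \<rho> s0 * Y s0) \<le> (\<Sum>s0\<in>UNIV. pmf \<rho> s0 * (1 / (1 - \<gamma>)))"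
    using Y by (intro sum_mono mult_left_mono) auto
  also have "\<dots> = 1 / (1 - \<gamma>)" by (simp only: sum_distrib_right[symmetric] pmf_sum1)
  finally have up: "(\<Sum>s0\<in>UNIV. pmf \<rho> s0 * Y s0) \<le> 1 / (1 - \<gamma>)" .
  have lo: "0 \<le> (\<Sum>s0\<in>UNIV. pmf \<rho> s0 * Y s0)" using Y by (intro sum_nonneg) auto
  have "(1 - \<gamma>) * (\<Sum>s0\<in>UNIV. pmf \<rho> s0 * Y s0) \<le> (1 - \<gamma>) * (1 / (1 - \<gamma>))"
    using up g by (intro mult_left_mono) auto
  moreover have "(1 - \<gamma>) * (1 / (1 - \<gamma>)) = 1" using g by simp
  moreover have "0 \<le> (1 - \<gamma>) * (\<Sum>s0\<in>UNIV. pmf \<rho> s0 * Y s0)" using lo g by simp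
  ultimately show ?thesis unfolding dvisit_def Y_def[symmetric] by linarith
qed

lemma ghat_eq:
  "mdp_ghat Pt rw \<gamma> \<rho> \<theta> \<sigma> (s,a) = dvisit Pt \<gamma> \<rho> (tpol \<theta>) s / (1 - \<gamma>) * Qfun Pt rw \<gamma> (tpol \<theta>) s (\<sigma> s)
      * ((if \<sigma> s = a then 1 else 0) - tpol \<theta> s a)"
proof -
  have ne: "tpol \<theta> s b \<noteq> 0" for b using tpol_pos[of \<theta> s b] by simp
  have "(\<Sum>b\<in>UNIV. tpol \<theta> s b * mdp_Qhat Pt rw \<gamma> \<theta> \<sigma> s b) = (\<Sum>b\<in>UNIV. if \<sigma> s = b then Qfun Pt rw \<gamma> (tpol \<theta>) s b else 0)"
    by (intro sum.cong) (auto simp: mdp_Qhat_def ne)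
  also have "\<dots> = Qfun Pt rw \<gamma> (tpol \<theta>) s (\<sigma> s)" by simp
  finally have M: "(\<Sum>b\<in>UNIV. tpol \<theta> s b * mdp_Qhat Pt rw \<gamma> \<theta> \<sigma> s b) = Qfun Pt rw \<gamma> (tpol \<theta>) s (\<sigma> s)" .
  show ?thesis
  proof (cases "\<sigma> s = a")
    case True
    have X: "tpol \<theta> s a * (mdp_Qhat Pt rw \<gamma> \<theta> \<sigma> s a - Qfun Pt rw \<gamma> (tpol \<theta>) s (\<sigma> s))
      = Qfun Pt rw \<gamma> (tpol \<theta>) s (\<sigma> s) * (1 - tpol \<theta> s a)"
      using ne[of a] True by (simp add: mdp_Qhat_def right_diff_distrib algebra_simps)
    show ?thesis unfolding mdp_ghat_def Let_def fst_conv snd_conv M mult.assoc[of _ "tpol \<theta> s a"] X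
      using True by simp
  next
    case False
    then show ?thesis unfolding mdp_ghat_def Let_def fst_conv snd_conv M by (simp add: mdp_Qhat_def)
  qed
qed

lemma grad_abs:
  assumes "\<gamma> < 1" "0 \<le> dvisit Pt \<gamma> \<rho> (tpol \<theta>) s"
  shows "\<bar>mdp_grad Pt rw \<gamma> \<rho> \<theta> (s,a)\<bar> = dvisit Pt \<gamma> \<rho> (tpol \<theta>) s / (1 - \<gamma>) *
     (tpol \<theta> s a * \<bar>Qfun Pt rw \<gamma> (tpol \<theta>) s a - (\<Sum>b\<in>UNIV. tpol \<theta> s b * Qfun Pt rw \<gamma> (tpol \<theta>) s b)\<bar>)"
  unfolding mdp_grad_def Let_def fst_conv snd_conv Afun_def Vfun_def
  using assms tpol_nn[of \<theta> s a] by (simp add: abs_mult)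




lemma gen_c4:
  fixes c d T :: real
  assumes "c \<noteq> 0"
  shows "d / c ^ 4 * (4 * T) = 4 / c ^ 3 * (d / c * T)"
proof -
  have "c ^ 4 = c ^ 3 * c" by (simp add: eval_nat_numeral)
  then show ?thesis using assms by simp
qed

lemma mdp_part:
  fixes Pt :: "'s::finite \<Rightarrow> 'act::finite \<Rightarrow> 's pmf" and \<theta> :: "'s \<Rightarrow> 'act \<Rightarrow> real"
  assumes rw: "\<And>s a. 0 \<le> rw s a \<and> rw s a \<le> 1" and g: "0 \<le> \<gamma>" "\<gamma> < 1"
    and gpos: "mdp_gap Pt rw \<gamma> \<theta> > 0"
  shows "mdp_second_moment Pt rw \<gamma> \<rho> \<theta>
          \<le> 4 * real CARD('act) powr (3/2) * real CARD('s) powr (1/2)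
              / ((1 - \<gamma>) ^ 4 * (mdp_gap Pt rw \<gamma> \<theta>)\<^sup>2)
             * l2norm (mdp_grad Pt rw \<gamma> \<rho> \<theta>)"
proof -
  let ?\<pi> = "tpol \<theta>"
  let ?Q = "Qfun Pt rw \<gamma> (tpol \<theta>)"
  let ?d = "dvisit Pt \<gamma> \<rho> (tpol \<theta>)"
  let ?S2 = "\<lambda>s. (\<Sum>a\<in>UNIV. (tpol \<theta> s a)\<^sup>2)"
  let ?K = "\<lambda>s b. (\<Sum>a'\<in>UNIV. ((if b = a' then 1 else 0) - tpol \<theta> s a')\<^sup>2)"
  let ?H = "\<lambda>s b. (?d s / (1 - \<gamma>) * ?Q s b)\<^sup>2 * ?K s b"
  let ?g = "l2norm (mdp_grad Pt rw \<gamma> \<rho> \<theta>)"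
  let ?\<Delta> = "mdp_gap Pt rw \<gamma> \<theta>"
  let ?E = "mdp_second_moment Pt rw \<gamma> \<rho> \<theta>"
  have c: "1 - \<gamma> > 0" using g by simp
  have Qb: "0 \<le> ?Q s a \<and> ?Q s a \<le> 1 / (1 - \<gamma>)" for s a by (rule Q_bounds[OF rw g])
  have db: "0 \<le> ?d s \<and> ?d s \<le> 1" for s by (rule d_bounds[OF g])
  have K0: "?K s b \<ge> 0" for s b by (intro sum_nonneg) auto
  have norm_eq: "(l2norm (mdp_ghat Pt rw \<gamma> \<rho> \<theta> \<sigma>))\<^sup>2 = (\<Sum>s\<in>UNIV. ?H s (\<sigma> s))" for \<sigma>
    unfolding l2norm_sq sum_pair_UNIV ghat_eq sum_distrib_left
    by (intro sum.cong refl) (simp add: power_mult_distrib power_divide mult.commute mult.left_commute)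
  have "?E = (\<Sum>\<sigma>\<in>UNIV. \<Sum>s\<in>UNIV. (\<Prod>s\<in>UNIV. ?\<pi> s (\<sigma> s)) * ?H s (\<sigma> s))"
    unfolding mdp_second_moment_def norm_eq by (simp add: sum_distrib_left)
  also have "\<dots> = (\<Sum>s\<in>UNIV. \<Sum>\<sigma>\<in>UNIV. (\<Prod>s\<in>UNIV. ?\<pi> s (\<sigma> s)) * ?H s (\<sigma> s))"
    by (rule sum.swap)
  also have "\<dots> = (\<Sum>s\<in>UNIV. \<Sum>a\<in>UNIV. ?\<pi> s a * ?H s a)"
    by (intro sum.cong refl marginal tpol_sum)
  also have "\<dots> \<le> (\<Sum>s\<in>UNIV. \<Sum>a\<in>UNIV. ?\<pi> s a * (?d s / (1 - \<gamma>) ^ 4 * ?K s a))"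
  proof (intro sum_mono mult_left_mono tpol_nn mult_right_mono K0)
    fix s a
    have "(?d s / (1 - \<gamma>) * ?Q s a)\<^sup>2 = (?d s)\<^sup>2 * (?Q s a)\<^sup>2 / (1 - \<gamma>)\<^sup>2"
      by (simp add: power_mult_distrib power_divide)
    also have "\<dots> \<le> ?d s * (1 / (1 - \<gamma>))\<^sup>2 / (1 - \<gamma>)\<^sup>2"
    proof (intro divide_right_mono mult_mono)
      show "(?d s)\<^sup>2 \<le> ?d s" using db[of s] by (simp add: power2_eq_square mult_left_le)
      show "(?Q s a)\<^sup>2 \<le> (1 / (1 - \<gamma>))\<^sup>2" using Qb[of s a] by (intro power_mono) auto
    qed (use db[of s] in auto)
    also have "\<dots> = ?d s / (1 - \<gamma>) ^ 4"
    proof -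
      have p4: "(1 - \<gamma>) ^ 4 = (1 - \<gamma>)\<^sup>2 * (1 - \<gamma>)\<^sup>2"
        by (simp flip: power_add)
      show ?thesis unfolding p4 by (simp add: power_divide)
    qed
    finally show "(?d s / (1 - \<gamma>) * ?Q s a)\<^sup>2 \<le> ?d s / (1 - \<gamma>) ^ 4" .
  qed
  also have "\<dots> = (\<Sum>s\<in>UNIV. ?d s / (1 - \<gamma>) ^ 4 * (1 - ?S2 s))"
  proof (intro sum.cong refl)
    fix s
    have "(\<Sum>a\<in>UNIV. ?\<pi> s a * (?d s / (1 - \<gamma>) ^ 4 * ?K s a)) = ?d s / (1 - \<gamma>) ^ 4 * (\<Sum>a\<in>UNIV. ?\<pi> s a * ?K s a)"
      by (simp add: sum_distrib_left algebra_simps)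
    also have "(\<Sum>a\<in>UNIV. ?\<pi> s a * ?K s a) = 1 - ?S2 s" by (rule Kavg[OF tpol_sum])
    finally show "(\<Sum>a\<in>UNIV. ?\<pi> s a * (?d s / (1 - \<gamma>) ^ 4 * ?K s a)) = ?d s / (1 - \<gamma>) ^ 4 * (1 - ?S2 s)" .
  qed
  finally have E1: "?E \<le> (\<Sum>s\<in>UNIV. ?d s / (1 - \<gamma>) ^ 4 * (1 - ?S2 s))" .
  have g0: "?g \<ge> 0" unfolding l2norm_def by (simp add: sum_nonneg)
  define A where "A = real CARD('act)"
  define S where "S = real CARD('s)"
  have A1: "A \<ge> 1" unfolding A_def by simp
  have S1: "S \<ge> 1" unfolding S_def by simp
  have Apow: "A powr (3/2) = A * sqrt A"
  proof -
    have "A powr (3/2) = A powr (1 + 1/2)" by simp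
    also have "\<dots> = A powr 1 * A powr (1/2)" by (rule powr_add)
    also have "\<dots> = A * sqrt A" using A1 by (simp add: powr_half_sqrt)
    finally show ?thesis .
  qed
  have Spow: "S powr (1/2) = sqrt S" using S1 by (simp add: powr_half_sqrt)
  have tgt0: "0 \<le> 4 * A powr (3/2) * S powr (1/2) / ((1 - \<gamma>) ^ 4 * ?\<Delta>\<^sup>2) * ?g"
    using g0 c by simp
  show ?thesis unfolding A_def[symmetric] S_def[symmetric]
  proof (cases "\<exists>a a'::'act. a \<noteq> a'")
    case False
    then obtain b :: 'act where U: "UNIV = {b}" by (metis UNIV_eq_I singletonI)
    have "?S2 s = 1" for s
    proof -
      have "?\<pi> s b = 1" using tpol_sum[of \<theta> s] unfolding U by simp
      thus ?thesis unfolding U by simp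
    qed
    hence "?E \<le> 0" using E1 by simp
    thus "?E \<le> 4 * A powr (3/2) * S powr (1/2) / ((1 - \<gamma>) ^ 4 * ?\<Delta>\<^sup>2) * ?g" using tgt0 by linarith
  next
    case True
    have fin: "finite {\<bar>?Q s a - ?Q s a'\<bar> | s a a'. a \<noteq> a'}"
    proof (rule finite_subset[of _ "(\<lambda>(s,a,a'). \<bar>?Q s a - ?Q s a'\<bar>) ` UNIV"])
      show "{\<bar>?Q s a - ?Q s a'\<bar> | s a a'. a \<noteq> a'} \<subseteq> (\<lambda>(s,a,a'). \<bar>?Q s a - ?Q s a'\<bar>) ` UNIV"
      proof
        fix x assume "x \<in> {\<bar>?Q s a - ?Q s a'\<bar> | s a a'. a \<noteq> a'}"
        then obtain s a a' where "x = \<bar>?Q s a - ?Q s a'\<bar>" by blast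
        then show "x \<in> (\<lambda>(s,a,a'). \<bar>?Q s a - ?Q s a'\<bar>) ` UNIV"
          by (intro image_eqI[of _ _ "(s,a,a')"]) auto
      qed
    qed auto
    have gap: "?\<Delta> \<le> \<bar>?Q s a - ?Q s a'\<bar>" if "a \<noteq> a'" for s a a'
      unfolding mdp_gap_def using that by (intro Min_le fin) blast
    obtain a0 a1 :: 'act where "a0 \<noteq> a1" using True by blast
    from gap[OF this, of undefined] Qb[of undefined a0] Qb[of undefined a1]
    have D1: "?\<Delta> \<le> 1 / (1 - \<gamma>)" by linarith
    have D0: "?\<Delta> > 0" by (rule gpos)
    have core: "(1 - ?S2 s) * ?\<Delta> \<le> 4 * (\<Sum>a\<in>UNIV. ?\<pi> s a * \<bar>?Q s a - (\<Sum>b\<in>UNIV. ?\<pi> s b * ?Q s b)\<bar>)" for s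
      using D0 gap by (intro core_gap tpol_nn tpol_sum) auto
    have "?E * ?\<Delta> \<le> (\<Sum>s\<in>UNIV. ?d s / (1 - \<gamma>) ^ 4 * (1 - ?S2 s)) * ?\<Delta>"
      using E1 D0 by (intro mult_right_mono) auto
    also have "\<dots> = (\<Sum>s\<in>UNIV. ?d s / (1 - \<gamma>) ^ 4 * ((1 - ?S2 s) * ?\<Delta>))"
      by (simp add: sum_distrib_right mult.assoc)
    also have "\<dots> \<le> (\<Sum>s\<in>UNIV. ?d s / (1 - \<gamma>) ^ 4 * (4 * (\<Sum>a\<in>UNIV. ?\<pi> s a * \<bar>?Q s a - (\<Sum>b\<in>UNIV. ?\<pi> s b * ?Q s b)\<bar>)))"
      using db c by (intro sum_mono mult_left_mono core) auto
    also have "\<dots> = (\<Sum>s\<in>UNIV. 4 / (1 - \<gamma>) ^ 3 * (?d s / (1 - \<gamma>) * (\<Sum>a\<in>UNIV. ?\<pi> s a * \<bar>?Q s a - (\<Sum>b\<in>UNIV. ?\<pi> s b * ?Q s b)\<bar>)))"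
      using c by (intro sum.cong refl gen_c4) auto
    also have "\<dots> = 4 / (1 - \<gamma>) ^ 3 * (\<Sum>s\<in>UNIV. \<Sum>a\<in>UNIV. ?d s / (1 - \<gamma>) * (?\<pi> s a * \<bar>?Q s a - (\<Sum>b\<in>UNIV. ?\<pi> s b * ?Q s b)\<bar>))"
      by (simp only: sum_distrib_left)
    also have "(\<Sum>s\<in>UNIV. \<Sum>a\<in>UNIV. ?d s / (1 - \<gamma>) * (?\<pi> s a * \<bar>?Q s a - (\<Sum>b\<in>UNIV. ?\<pi> s b * ?Q s b)\<bar>))
             = (\<Sum>x\<in>UNIV. \<bar>mdp_grad Pt rw \<gamma> \<rho> \<theta> x\<bar>)"
      unfolding sum_pair_UNIV by (intro sum.cong refl) (rule grad_abs[OF g(2) conjunct1[OF db], symmetric])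
    finally have key0: "?E * ?\<Delta> \<le> 4 / (1 - \<gamma>) ^ 3 * (\<Sum>x\<in>UNIV. \<bar>mdp_grad Pt rw \<gamma> \<rho> \<theta> x\<bar>)" .
    have "(\<Sum>x\<in>UNIV. \<bar>mdp_grad Pt rw \<gamma> \<rho> \<theta> x\<bar>) \<le> sqrt (real CARD('s \<times> 'act)) * ?g" by (rule l1_l2)
    also have "sqrt (real CARD('s \<times> 'act)) = sqrt S * sqrt A"
      unfolding S_def A_def by (simp add: real_sqrt_mult)
    finally have L: "(\<Sum>x\<in>UNIV. \<bar>mdp_grad Pt rw \<gamma> \<rho> \<theta> x\<bar>) \<le> sqrt S * sqrt A * ?g" .
    have "4 / (1 - \<gamma>) ^ 3 * (\<Sum>x\<in>UNIV. \<bar>mdp_grad Pt rw \<gamma> \<rho> \<theta> x\<bar>) \<le> 4 / (1 - \<gamma>) ^ 3 * (sqrt S * sqrt A * ?g)"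
      using c L by (intro mult_left_mono) auto
    with key0 have key: "?E * ?\<Delta> \<le> 4 / (1 - \<gamma>) ^ 3 * (sqrt S * sqrt A * ?g)" by linarith
    define X where "X = 4 * sqrt S * sqrt A * ?g / ((1 - \<gamma>) ^ 3 * ?\<Delta>)"
    have X0: "X \<ge> 0" unfolding X_def using g0 c D0 S1 A1
      by (intro divide_nonneg_pos mult_nonneg_nonneg mult_pos_pos) auto
    have EX: "?E \<le> X" unfolding X_def using key c D0 by (simp add: field_simps)
    have k1: "1 \<le> A / ((1 - \<gamma>) * ?\<Delta>)"
    proof -
      have "(1 - \<gamma>) * ?\<Delta> \<le> (1 - \<gamma>) * (1 / (1 - \<gamma>))" using D1 c by (intro mult_left_mono) auto
      also have "\<dots> = 1" using c by simp
      finally have "(1 - \<gamma>) * ?\<Delta> \<le> A" using A1 by simp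
      thus ?thesis using c D0 by simp
    qed
    have "X \<le> X * (A / ((1 - \<gamma>) * ?\<Delta>))" using mult_left_mono[OF k1 X0] by simp
    also have "\<dots> = 4 * A powr (3/2) * S powr (1/2) / ((1 - \<gamma>) ^ 4 * ?\<Delta>\<^sup>2) * ?g"
    proof -
      have p43: "(1 - \<gamma>) ^ 4 = (1 - \<gamma>) ^ 3 * (1 - \<gamma>)" by (simp add: eval_nat_numeral)
      show ?thesis unfolding Apow Spow X_def p43 using c D0 by (simp add: field_simps power2_eq_square)
    qed
    finally show "?E \<le> 4 * A powr (3/2) * S powr (1/2) / ((1 - \<gamma>) ^ 4 * ?\<Delta>\<^sup>2) * ?g" using EX by linarith
  qed
qed


theorem theorem4:
  fixes P :: "'arm::finite \<Rightarrow> real measure"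
    and Pt :: "'s::finite \<Rightarrow> 'act::finite \<Rightarrow> 's pmf"
    and rw :: "'s \<Rightarrow> 'act \<Rightarrow> real"
    and \<gamma> :: real
    and \<rho> :: "'s pmf"
  assumes P_prob: "\<And>a. prob_space (P a)"
    and P_borel: "\<And>a. sets (P a) = sets borel"
    and P_supp: "\<And>a. AE x in P a. 0 \<le> x \<and> x \<le> 1"
    and rw_bounds: "\<And>s a. 0 \<le> rw s a \<and> rw s a \<le> 1"
    and \<gamma>_bounds: "0 \<le> \<gamma>" "\<gamma> < 1"
  shows
    "(\<forall>\<theta> :: 'arm \<Rightarrow> real.
        bandit_gap (mean_reward P) > 0 \<longrightarrow>
        bandit_second_moment P \<theta>
          \<le> 8 * real CARD('arm) powr (3/2) / (bandit_gap (mean_reward P))\<^sup>2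
             * l2norm (bandit_grad (mean_reward P) \<theta>))
   \<and> (\<forall>\<theta> :: 's \<Rightarrow> 'act \<Rightarrow> real.
        mdp_gap Pt rw \<gamma> \<theta> > 0 \<longrightarrow>
        mdp_second_moment Pt rw \<gamma> \<rho> \<theta>
          \<le> 4 * real CARD('act) powr (3/2) * real CARD('s) powr (1/2)
              / ((1 - \<gamma>) ^ 4 * (mdp_gap Pt rw \<gamma> \<theta>)\<^sup>2)
             * l2norm (mdp_grad Pt rw \<gamma> \<rho> \<theta>))"
proof (intro conjI allI impI)
  fix \<theta> :: "'arm \<Rightarrow> real"
  assume "bandit_gap (mean_reward P) > 0"
  then show "bandit_second_moment P \<theta>
          \<le> 8 * real CARD('arm) powr (3/2) / (bandit_gap (mean_reward P))\<^sup>2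
             * l2norm (bandit_grad (mean_reward P) \<theta>)"
    by (rule bandit_part[OF P_prob P_supp])
next
  fix \<theta> :: "'s \<Rightarrow> 'act \<Rightarrow> real"
  assume "mdp_gap Pt rw \<gamma> \<theta> > 0"
  then show "mdp_second_moment Pt rw \<gamma> \<rho> \<theta>
          \<le> 4 * real CARD('act) powr (3/2) * real CARD('s) powr (1/2)
              / ((1 - \<gamma>) ^ 4 * (mdp_gap Pt rw \<gamma> \<theta>)\<^sup>2)
             * l2norm (mdp_grad Pt rw \<gamma> \<rho> \<theta>)"
    by (rule mdp_part[OF rw_bounds \<gamma>_bounds])
qed

end
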